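(* Let $n,m\geq 1$ and let $(S_1,\dots,S_{n+m})$ be a random vector of real scores which is exchangeable (its distribution is invariant under any permutation of coordinates) and has almost surely no ties. Define the conformal $p$-values $$p_i=\frac{1}{n+1}\Big(1+\sum_{j=1}^n \mathbf{1}\{S_j\geq S_{n+i}\}\Big),\quad i\in\{1,\dots,m\}.$$ Then $(p_1,\dots,p_m)$ has joint distribution $P_{n,m}$; in particular this joint distribution does not depend on the specific distribution of the scores.
   Context: For a fixed $U=(U_1,\dots,U_n)\in[0,1]^n$ with order statistics $U_{(1)}\leq\dots\leq U_{(n)}$ and conventions $U_{(0)}=0$, $U_{(n+1)}=1$, $P^U$ is the distribution on $\{\ell/(n+1):\ell\in\{1,\dots,n+1\}\}$ with $P^U(\{\ell/(n+1)\})=U_{(\ell)}-U_{(\ell-1)}$. $P_{n,m}$ is the distribution on $[0,1]^m$ of $(q_1,\dots,q_m)$ generated as follows: $U_1,\dots,U_n$ i.i.d. $\mathrm{Unif}[0,1]$, and conditionally on $U=(U_1,\dots,U_n)$, $q_1,\dots,q_m$ i.i.d. with distribution $P^U$. *)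

theory Defs
  imports "HOL-Probability.Probability"
begin

definition ord_stat :: "nat \<Rightarrow> (nat \<Rightarrow> real) \<Rightarrow> nat \<Rightarrow> real" where
  "ord_stat n U l = (if l = 0 then 0 else if l \<ge> n + 1 then 1
                     else sort (map U [0..<n]) ! (l - 1))"

definition PU :: "nat \<Rightarrow> (nat \<Rightarrow> real) \<Rightarrow> real measure" where
  "PU n U = measure_of UNIV (sets borel)
     (\<lambda>A. \<Sum>l\<in>{1..n+1}. ennreal (ord_stat n U l - ord_stat n U (l - 1))
                          * indicator A (real l / real (n + 1)))"

definition P_nm :: "nat \<Rightarrow> nat \<Rightarrow> (nat \<Rightarrow> real) measure" where
  "P_nm n m = (PiM {..<n} (\<lambda>_. uniform_measure lborel {0..1::real}))
                \<bind> (\<lambda>U. PiM {..<m} (\<lambda>_. PU n U))"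

text \<open>Conformal p-values (0-based: calibration scores S_0..S_{n-1}, test scores S_n..S_{n+m-1}).\<close>
definition conf_pval :: "nat \<Rightarrow> (nat \<Rightarrow> real) \<Rightarrow> nat \<Rightarrow> real" where
  "conf_pval n s i = (1 + real (card {j. j < n \<and> s j \<ge> s (n + i)})) / real (n + 1)"

end

theory Submission
  imports Defs
begin

definition rk :: "nat \<Rightarrow> (nat \<Rightarrow> real) \<Rightarrow> nat \<Rightarrow> nat" where
  "rk N x i = (if i < N then card {j. j < N \<and> x j < x i} else i)"

definition nties :: "nat \<Rightarrow> (nat \<Rightarrow> real) \<Rightarrow> bool" where
  "nties N x \<longleftrightarrow> (\<forall>i<N. \<forall>j<N. i \<noteq> j \<longrightarrow> x i \<noteq> x j)"

lemma rk_less: "i < N \<Longrightarrow> rk N x i < N"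
proof -
  assume i: "i < N"
  have "{j. j < N \<and> x j < x i} \<subseteq> {..<N} - {i}" by auto
  then have "card {j. j < N \<and> x j < x i} \<le> card ({..<N} - {i})"
    by (intro card_mono) auto
  also have "\<dots> < N" using i by simp
  finally show ?thesis using i by (simp add: rk_def)
qed

lemma rk_strict: "i < N \<Longrightarrow> j < N \<Longrightarrow> x i < x j \<Longrightarrow> rk N x i < rk N x j"
proof -
  assume i: "i < N" and j: "j < N" and lt: "x i < x j"
  have "{k. k < N \<and> x k < x i} \<subset> {k. k < N \<and> x k < x j}"
    using i lt by auto
  then have "card {k. k < N \<and> x k < x i} < card {k. k < N \<and> x k < x j}"
    by (intro psubset_card_mono) auto
  then show ?thesis using i j by (simp add: rk_def)
qed

lemma rk_le_iff:
  assumes "nties N x" "i < N" "j < N"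
  shows "x i \<le> x j \<longleftrightarrow> rk N x i \<le> rk N x j"
proof (cases "i = j")
  case False
  then have "x i \<noteq> x j" using assms by (auto simp: nties_def)
  then show ?thesis using rk_strict[of i N j x] rk_strict[of j N i x] assms
    by (cases "x i < x j") auto
qed simp

lemma rk_permutes:
  assumes "nties N x"
  shows "rk N x permutes {..<N}"
proof -
  have inj: "inj_on (rk N x) {..<N}"
  proof (rule inj_onI)
    fix i j assume "i \<in> {..<N}" "j \<in> {..<N}" "rk N x i = rk N x j"
    then show "i = j" using rk_le_iff[OF assms, of i j] rk_le_iff[OF assms, of j i] assms
      by (auto simp: nties_def)
  qed
  have "rk N x ` {..<N} \<subseteq> {..<N}" using rk_less by auto
  then have "rk N x ` {..<N} = {..<N}"
    using inj by (intro card_subset_eq) (auto simp: card_image)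
  with inj have "bij_betw (rk N x) {..<N} {..<N}" by (simp add: bij_betw_def)
  then show ?thesis
    by (rule bij_imp_permutes) (simp add: rk_def)
qed

lemma permutes_rk_nties:
  assumes "rk N x permutes {..<N}"
  shows "nties N x"
  unfolding nties_def
proof (intro allI impI)
  fix i j assume ij: "i < N" "j < N" "i \<noteq> j"
  show "x i \<noteq> x j"
  proof
    assume "x i = x j"
    then have "rk N x i = rk N x j" using ij by (simp add: rk_def)
    then show False using ij permutes_inj[OF assms] by (auto dest: injD)
  qed
qed

lemma rk_comp:
  assumes "\<sigma> permutes {..<N}"
  shows "rk N (\<lambda>i\<in>{..<N}. x (\<sigma> i)) = rk N x \<circ> \<sigma>"
proof
  fix i
  have pin: "\<And>k. \<sigma> k < N \<longleftrightarrow> k < N" using permutes_in_image[OF assms] by (metis lessThan_iff)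
  show "rk N (\<lambda>i\<in>{..<N}. x (\<sigma> i)) i = (rk N x \<circ> \<sigma>) i"
  proof (cases "i < N")
    case True
    have si: "\<sigma> i < N" using True assms permutes_in_image by fastforce
    have "{j. j < N \<and> (\<lambda>i\<in>{..<N}. x (\<sigma> i)) j < (\<lambda>i\<in>{..<N}. x (\<sigma> i)) i}
        = {j. j < N \<and> x (\<sigma> j) < x (\<sigma> i)}" using True by auto
    also have "\<dots> = inv \<sigma> ` {k. k < N \<and> x k < x (\<sigma> i)}"
    proof -
      have "{j. j < N \<and> x (\<sigma> j) < x (\<sigma> i)} = \<sigma> -` {k. k < N \<and> x k < x (\<sigma> i)}"
        using pin by auto
      also have "\<sigma> -` {k. k < N \<and> x k < x (\<sigma> i)} = inv \<sigma> ` {k. k < N \<and> x k < x (\<sigma> i)}"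
        by (rule bij_vimage_eq_inv_image[OF permutes_bij[OF assms]])
      finally show ?thesis .
    qed
    also have "card \<dots> = card {k. k < N \<and> x k < x (\<sigma> i)}"
      by (rule card_image) (meson assms inj_on_inverseI permutes_inverses(1) inj_on_def bij_inv_eq_iff permutes_bij injI permutes_inj permutes_inv inj_on_subset subset_UNIV)
    finally show ?thesis using True si by (simp add: rk_def)
  next
    case False
    then have "\<sigma> i = i" using assms by (auto simp: permutes_def)
    then show ?thesis using False by (simp add: rk_def)
  qed
qed

lemma rk_eq_measurable:
  "{x \<in> space (PiM {..<N} (\<lambda>_. borel)). rk N x = \<pi>} \<in> sets (PiM {..<N} (\<lambda>_. borel))"
  if "\<pi> permutes {..<N}"
proof -
  have eq: "{x \<in> space (PiM {..<N} (\<lambda>_. borel)). rk N x = \<pi>}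
    = {x \<in> space (PiM {..<N} (\<lambda>_. borel)). \<forall>i\<in>{..<N}.
          (\<Sum>j<N. if x j < x i then 1 else 0 :: real) = real (\<pi> i)}"
  proof -
    have c: "real (card {j. j < N \<and> x j < x i}) = (\<Sum>j<N. if x j < x i then 1 else 0 :: real)" for x :: "nat \<Rightarrow> real" and i
    proof -
      have "card {j. j < N \<and> x j < x i} = card {j\<in>{..<N}. x j < x i}" by (rule arg_cong[where f=card]) auto
      then show ?thesis by (simp add: sum.If_cases Int_def)
    qed
    have "rk N x = \<pi> \<longleftrightarrow> (\<forall>i\<in>{..<N}. real (card {j. j < N \<and> x j < x i}) = real (\<pi> i))" for x
    proof
      assume "rk N x = \<pi>" then show "\<forall>i\<in>{..<N}. real (card {j. j < N \<and> x j < x i}) = real (\<pi> i)"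
        by (auto simp: rk_def)
    next
      assume a: "\<forall>i\<in>{..<N}. real (card {j. j < N \<and> x j < x i}) = real (\<pi> i)"
      show "rk N x = \<pi>"
      proof
        fix i show "rk N x i = \<pi> i"
          using a that by (cases "i < N") (auto simp: rk_def permutes_def)
      qed
    qed
    then show ?thesis using c by simp
  qed
  show ?thesis unfolding eq by measurable
qed

definition hpv :: "nat \<Rightarrow> nat \<Rightarrow> (nat \<Rightarrow> nat) \<Rightarrow> nat \<Rightarrow> real" where
  "hpv n m \<pi> = (\<lambda>i\<in>{..<m}. conf_pval n (\<lambda>k. real (\<pi> k)) i)"

lemma conf_pval_sum:
  "conf_pval n s i = (1 + (\<Sum>j<n. if s (n + i) \<le> s j then 1 else 0)) / real (n + 1)"
proof -
  have "card {j. j < n \<and> s j \<ge> s (n + i)} = card {j\<in>{..<n}. s j \<ge> s (n + i)}"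
    by (rule arg_cong[where f=card]) auto
  then show ?thesis by (simp add: conf_pval_def sum.If_cases Int_def)
qed

lemma general_pv:
  fixes M :: "'w measure" and S :: "nat \<Rightarrow> 'w \<Rightarrow> real" and n m :: nat
  assumes "prob_space M"
    and meas: "\<And>i. i < n + m \<Longrightarrow> S i \<in> borel_measurable M"
    and exch: "\<And>\<sigma>. \<sigma> permutes {..<n + m} \<Longrightarrow>
        distr M (PiM {..<n + m} (\<lambda>_. borel)) (\<lambda>\<omega>. \<lambda>i\<in>{..<n + m}. S (\<sigma> i) \<omega>)
      = distr M (PiM {..<n + m} (\<lambda>_. borel)) (\<lambda>\<omega>. \<lambda>i\<in>{..<n + m}. S i \<omega>)"
    and no_ties: "AE \<omega> in M. \<forall>i<n + m. \<forall>j<n + m. i \<noteq> j \<longrightarrow> S i \<omega> \<noteq> S j \<omega>"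
    and B: "B \<in> sets (PiM {..<m} (\<lambda>_. borel))"
  shows "emeasure (distr M (PiM {..<m} (\<lambda>_. borel)) (\<lambda>\<omega>. \<lambda>i\<in>{..<m}. conf_pval n (\<lambda>k. S k \<omega>) i)) B
       = ennreal (real (card {\<pi>. \<pi> permutes {..<n+m} \<and> hpv n m \<pi> \<in> B}) / fact (n + m))"
proof -
  interpret prob_space M by fact
  define N where "N = n + m"
  define PB where "PB = PiM {..<N} (\<lambda>_. borel :: real measure)"
  define P where "P = {\<pi>. \<pi> permutes {..<N}}"
  define X where "X = (\<lambda>\<omega>. \<lambda>i\<in>{..<N}. S i \<omega>)"
  have Xm: "X \<in> measurable M PB"
    unfolding X_def PB_def by (rule measurable_restrict) (simp add: meas N_def)
  define E where "E = (\<lambda>\<pi>. {\<omega> \<in> space M. rk N (X \<omega>) = \<pi>})"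
  have E_eq: "E \<pi> = X -` {x \<in> space PB. rk N x = \<pi>} \<inter> space M" for \<pi>
    using measurable_space[OF Xm] by (auto simp: E_def)
  have Es: "E \<pi> \<in> sets M" if "\<pi> \<in> P" for \<pi>
    unfolding E_eq using that by (intro measurable_sets[OF Xm]) (auto simp: P_def PB_def intro: rk_eq_measurable)
  have finP: "finite P" unfolding P_def by (rule finite_permutations) simp
  have cinv: "emeasure M (E \<pi>) = emeasure M (E (\<pi> \<circ> inv \<sigma>))"
    if s: "\<sigma> permutes {..<N}" and p: "\<pi> \<in> P" for \<sigma> \<pi>
  proof -
    let ?F = "{x \<in> space PB. rk N x = \<pi>}"
    have Fs: "?F \<in> sets PB" using p rk_eq_measurable[of \<pi> N] by (simp add: P_def PB_def)
    define Y where "Y = (\<lambda>\<omega>. \<lambda>i\<in>{..<N}. S (\<sigma> i) \<omega>)"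
    have pin: "\<And>k. \<sigma> k < N \<longleftrightarrow> k < N" using permutes_in_image[OF s] by (metis lessThan_iff)
    have Ym: "Y \<in> measurable M PB"
      unfolding Y_def PB_def by (rule measurable_restrict) (use meas pin in \<open>auto simp: N_def\<close>)
    have "emeasure M (E \<pi>) = emeasure (distr M PB X) ?F"
      by (simp add: emeasure_distr Xm Fs E_eq)
    also have "distr M PB X = distr M PB Y"
      using exch[of \<sigma>] s unfolding X_def Y_def PB_def N_def by simp
    also have "emeasure (distr M PB Y) ?F = emeasure M (Y -` ?F \<inter> space M)"
      by (rule emeasure_distr[OF Ym Fs])
    also have "Y -` ?F \<inter> space M = E (\<pi> \<circ> inv \<sigma>)"
    proof -
      have YX: "Y \<omega> = (\<lambda>i\<in>{..<N}. X \<omega> (\<sigma> i))" for \<omega>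
        unfolding Y_def X_def using pin by (intro ext) auto
      have iff: "(f \<circ> \<sigma> = \<pi>) \<longleftrightarrow> (f = \<pi> \<circ> inv \<sigma>)" for f :: "nat \<Rightarrow> nat"
      proof
        assume "f \<circ> \<sigma> = \<pi>"
        then have "f \<circ> \<sigma> \<circ> inv \<sigma> = \<pi> \<circ> inv \<sigma>" by simp
        then show "f = \<pi> \<circ> inv \<sigma>" by (simp only: o_assoc[symmetric] permutes_inv_o(1)[OF s] comp_id)
      next
        assume "f = \<pi> \<circ> inv \<sigma>"
        then show "f \<circ> \<sigma> = \<pi>" by (simp only: o_assoc[symmetric] permutes_inv_o(2)[OF s] comp_id)
      qed
      show ?thesis
      proof (intro set_eqI iffI)
        fix \<omega> assume "\<omega> \<in> Y -` ?F \<inter> space M"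
        then have "\<omega> \<in> space M" "rk N (Y \<omega>) = \<pi>" by auto
        then show "\<omega> \<in> E (\<pi> \<circ> inv \<sigma>)" unfolding E_def by (simp add: YX rk_comp[OF s] iff)
      next
        fix \<omega> assume "\<omega> \<in> E (\<pi> \<circ> inv \<sigma>)"
        then have "\<omega> \<in> space M" "rk N (X \<omega>) = \<pi> \<circ> inv \<sigma>" by (auto simp: E_def)
        then show "\<omega> \<in> Y -` ?F \<inter> space M" using measurable_space[OF Ym] by (simp add: YX rk_comp[OF s] iff)
      qed
    qed
    finally show ?thesis .
  qed
  have call: "emeasure M (E \<pi>) = emeasure M (E \<pi>')" if p: "\<pi> \<in> P" "\<pi>' \<in> P" for \<pi> \<pi>'
  proof -
    have p1: "\<pi> permutes {..<N}" "\<pi>' permutes {..<N}" using p by (auto simp: P_def)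
    define \<sigma> where "\<sigma> = inv (inv \<pi> \<circ> \<pi>')"
    have c: "inv \<pi> \<circ> \<pi>' permutes {..<N}" by (rule permutes_compose[OF p1(2) permutes_inv[OF p1(1)]])
    have s: "\<sigma> permutes {..<N}" unfolding \<sigma>_def by (rule permutes_inv[OF c])
    have "\<pi> \<circ> inv \<sigma> = \<pi> \<circ> (inv \<pi> \<circ> \<pi>')"
      unfolding \<sigma>_def by (simp add: inv_inv_eq permutes_bij[OF c])
    also have "\<dots> = \<pi>'" by (simp add: o_assoc permutes_inv_o(1)[OF p1(1)])
    finally show ?thesis using cinv[OF s p(1)] by simp
  qed
  define c where "c = emeasure M (E id)"
  have idP: "id \<in> P" by (simp add: P_def permutes_id)
  have cc: "\<pi> \<in> P \<Longrightarrow> emeasure M (E \<pi>) = c" for \<pi> using call[OF _ idP] by (simp add: c_def)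
  have disj: "disjoint_family_on E Q" for Q by (auto simp: disjoint_family_on_def E_def)
  have XS: "\<omega> \<in> space M \<Longrightarrow> i < N \<Longrightarrow> X \<omega> i = S i \<omega>" for \<omega> i by (simp add: X_def)
  have UE: "(\<Union>\<pi>\<in>P. E \<pi>) = {\<omega> \<in> space M. nties N (X \<omega>)}"
    using rk_permutes permutes_rk_nties by (auto simp: E_def P_def)
  have "(\<Sum>\<pi>\<in>P. emeasure M (E \<pi>)) = emeasure M (\<Union>\<pi>\<in>P. E \<pi>)"
    using Es disj finP by (intro sum_emeasure) auto
  also have "\<dots> = emeasure M (space M)"
  proof (rule emeasure_eq_AE)
    show "AE x in M. (x \<in> (\<Union>\<pi>\<in>P. E \<pi>)) = (x \<in> space M)"
      using no_ties by eventually_elim (auto simp: UE nties_def XS N_def)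
    show "(\<Union>\<pi>\<in>P. E \<pi>) \<in> sets M" using Es finP by auto
  qed simp
  also have "\<dots> = 1" by (simp add: emeasure_space_1)
  finally have "(\<Sum>\<pi>\<in>P. c) = 1" using cc by simp
  then have cfact: "of_nat (fact N) * c = 1"
    using card_permutations[of "{..<N}" N] by (simp add: P_def)
  have cval: "c = ennreal (1 / fact N)"
  proof -
    have "c \<noteq> \<top>" using cfact by (metis ennreal_mult_eq_top_iff ennreal_one_neq_top of_nat_eq_0_iff fact_nonzero)
    then obtain r where r: "c = ennreal r" "r \<ge> 0" by (cases c) auto
    have "ennreal (real (fact N) * r) = 1" using cfact r
      by (simp add: ennreal_mult ennreal_of_nat_eq_real_of_nat)
    then have "real (fact N) * r = 1" using r by (simp add: ennreal_eq_1)
    then show ?thesis using r by (simp add: field_simps)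
  qed
  define PV where "PV = (\<lambda>\<omega>. \<lambda>i\<in>{..<m}. conf_pval n (\<lambda>k. S k \<omega>) i)"
  have PVm: "PV \<in> measurable M (PiM {..<m} (\<lambda>_. borel))"
    unfolding PV_def conf_pval_sum
  proof (rule measurable_restrict)
    fix i assume i: "i \<in> {..<m}"
    have [measurable]: "S (n+i) \<in> borel_measurable M" using i meas by simp
    have mj: "(\<lambda>\<omega>. if S (n + i) \<omega> \<le> S j \<omega> then 1 else 0 :: real) \<in> borel_measurable M" if "j \<in> {..<n}" for j
    proof -
      have [measurable]: "S j \<in> borel_measurable M" using that meas by simp
      show ?thesis by measurable
    qed
    show "(\<lambda>\<omega>. (1 + (\<Sum>j<n. if S (n + i) \<omega> \<le> S j \<omega> then 1 else 0)) / real (n + 1)) \<in> borel_measurable M"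
      by (intro borel_measurable_divide borel_measurable_add borel_measurable_const borel_measurable_sum mj)
  qed
  have PVeq: "PV \<omega> = hpv n m (rk N (X \<omega>))" if om: "\<omega> \<in> space M" and "nties N (X \<omega>)" for \<omega>
  proof -
    have "conf_pval n (\<lambda>k. S k \<omega>) i = conf_pval n (\<lambda>k. real (rk N (X \<omega>) k)) i" if i: "i < m" for i
    proof -
      have "{j. j < n \<and> S j \<omega> \<ge> S (n + i) \<omega>} = {j. j < n \<and> real (rk N (X \<omega>) j) \<ge> real (rk N (X \<omega>) (n + i))}"
        using rk_le_iff[OF \<open>nties N (X \<omega>)\<close>, of "n+i"] i om by (auto simp: XS[OF om] N_def)
      then show ?thesis by (simp add: conf_pval_def)
    qed
    then show ?thesis by (auto simp: PV_def hpv_def)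
  qed
  define Q where "Q = {\<pi>. \<pi> permutes {..<N} \<and> hpv n m \<pi> \<in> B}"
  have QP: "Q \<subseteq> P" by (auto simp: Q_def P_def)
  have finQ: "finite Q" using finP QP finite_subset by blast
  have "emeasure (distr M (PiM {..<m} (\<lambda>_. borel)) PV) B = emeasure M (PV -` B \<inter> space M)"
    by (rule emeasure_distr[OF PVm B])
  also have "\<dots> = emeasure M (\<Union>\<pi>\<in>Q. E \<pi>)"
  proof (rule emeasure_eq_AE)
    show "AE x in M. (x \<in> PV -` B \<inter> space M) = (x \<in> (\<Union>\<pi>\<in>Q. E \<pi>))"
      using no_ties
    proof eventually_elim
      case (elim \<omega>)
      show ?case
      proof (cases "\<omega> \<in> space M")
        case True
        then have nt: "nties N (X \<omega>)" using elim by (auto simp: nties_def XS N_def)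
        show ?thesis using True PVeq[OF True nt] rk_permutes[OF nt]
          by (auto simp: Q_def E_def)
      qed (auto simp: E_def)
    qed
    show "PV -` B \<inter> space M \<in> sets M" using measurable_sets[OF PVm B] .
    show "(\<Union>\<pi>\<in>Q. E \<pi>) \<in> sets M" using Es finQ QP by auto
  qed
  also have "\<dots> = (\<Sum>\<pi>\<in>Q. emeasure M (E \<pi>))"
    using Es disj finQ QP by (intro sum_emeasure[symmetric]) auto
  also have "\<dots> = (\<Sum>\<pi>\<in>Q. c)" using cc QP by (intro sum.cong) auto
  also have "\<dots> = of_nat (card Q) * ennreal (1 / fact N)" by (simp add: cval)
  also have "\<dots> = ennreal (real (card Q) / fact N)"
    by (simp add: ennreal_of_nat_eq_real_of_nat ennreal_mult[symmetric] divide_inverse)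
  finally show ?thesis by (simp add: PV_def Q_def N_def)
qed

definition unif :: "real measure" where "unif = uniform_measure lborel {0..1}"

lemma prob_unif: "prob_space unif"
  unfolding unif_def by (rule prob_space_uniform_measure) auto

lemma sets_unif[simp, measurable_cong]: "sets unif = sets borel"
  by (simp add: unif_def)

lemma space_unif[simp]: "space unif = UNIV"
  by (simp add: unif_def)

interpretation unifP: product_sigma_finite "\<lambda>_::nat. unif"
  unfolding product_sigma_finite_def by (simp add: prob_space_imp_sigma_finite prob_unif)

lemma prob_PiM_unif: "prob_space (PiM I (\<lambda>_::nat. unif))"
  by (rule prob_space_PiM) (rule prob_unif)

definition MP :: "nat \<Rightarrow> nat \<Rightarrow> ((nat \<Rightarrow> real) \<times> (nat \<Rightarrow> real)) measure" where
  "MP n m = PiM {..<n} (\<lambda>_. unif) \<Otimes>\<^sub>M PiM {..<m} (\<lambda>_. unif)"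

lemma pair_prob_MP: "pair_prob_space (PiM {..<n} (\<lambda>_::nat. unif)) (PiM {..<m} (\<lambda>_::nat. unif))"
  by (simp add: pair_prob_space_def pair_sigma_finite_def prob_space_imp_sigma_finite prob_PiM_unif)

lemma prob_MP: "prob_space (MP n m)"
  unfolding MP_def by (intro prob_space_pair prob_PiM_unif)

definition Zv :: "nat \<Rightarrow> nat \<Rightarrow> (nat \<Rightarrow> real) \<times> (nat \<Rightarrow> real) \<Rightarrow> nat \<Rightarrow> real" where
  "Zv n m \<omega> = (\<lambda>i\<in>{..<n+m}. if i < n then fst \<omega> i else snd \<omega> (i - n))"

definition SI :: "nat \<Rightarrow> nat \<Rightarrow> (nat \<Rightarrow> real) \<times> (nat \<Rightarrow> real) \<Rightarrow> real" where
  "SI n k \<omega> = (if k < n then - fst \<omega> k else - snd \<omega> (k - n))"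

lemma Zv_meas: "Zv n m \<in> measurable (MP n m) (PiM {..<n+m} (\<lambda>_. unif))"
  unfolding Zv_def MP_def
proof (rule measurable_restrict)
  fix i assume "i \<in> {..<n+m}"
  show "(\<lambda>\<omega>. if i < n then fst \<omega> i else snd \<omega> (i - n))
      \<in> measurable (PiM {..<n} (\<lambda>_. unif) \<Otimes>\<^sub>M PiM {..<m} (\<lambda>_. unif)) unif"
    using \<open>i \<in> {..<n+m}\<close> by (cases "i < n") auto
qed

lemma SI_meas: "k < n + m \<Longrightarrow> SI n k \<in> borel_measurable (MP n m)"
proof (cases "k < n")
  case False
  assume "k < n + m"
  then have "k - n \<in> {..<m}" using False by auto
  have "(\<lambda>\<omega>. snd \<omega> (k - n)) \<in> measurable (PiM {..<n} (\<lambda>_. unif) \<Otimes>\<^sub>M PiM {..<m} (\<lambda>_. unif)) unif"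
    by (rule measurable_compose[OF measurable_snd measurable_component_singleton[OF \<open>k - n \<in> {..<m}\<close>]])
  then have h: "(\<lambda>\<omega>. snd \<omega> (k - n)) \<in> borel_measurable (PiM {..<n} (\<lambda>_. unif) \<Otimes>\<^sub>M PiM {..<m} (\<lambda>_. unif))"
    by (simp add: measurable_cong_sets[OF refl sets_unif])
  have "SI n k = (\<lambda>\<omega>. - snd \<omega> (k - n))" using False by (simp add: SI_def fun_eq_iff)
  then show ?thesis unfolding MP_def using h by simp
next
  case True
  then have ki: "k \<in> {..<n}" by simp
  have "(\<lambda>\<omega>. fst \<omega> k) \<in> measurable (PiM {..<n} (\<lambda>_. unif) \<Otimes>\<^sub>M PiM {..<m} (\<lambda>_. unif)) unif"
    by (rule measurable_compose[OF measurable_fst measurable_component_singleton[OF ki]])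
  then have h: "(\<lambda>\<omega>. fst \<omega> k) \<in> borel_measurable (PiM {..<n} (\<lambda>_. unif) \<Otimes>\<^sub>M PiM {..<m} (\<lambda>_. unif))"
    by (simp add: measurable_cong_sets[OF refl sets_unif])
  have "SI n k = (\<lambda>\<omega>. - fst \<omega> k)" using True by (simp add: SI_def fun_eq_iff)
  then show ?thesis unfolding MP_def using h by simp
qed

lemma Zv_distr: "distr (MP n m) (PiM {..<n+m} (\<lambda>_. unif)) (Zv n m) = PiM {..<n+m} (\<lambda>_. unif)"
proof (rule unifP.PiM_eqI)
  interpret P: pair_prob_space "PiM {..<n} (\<lambda>_::nat. unif)" "PiM {..<m} (\<lambda>_::nat. unif)"
    by (rule pair_prob_MP)
  fix A assume A: "\<And>i. i \<in> {..<n+m} \<Longrightarrow> A i \<in> sets unif"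
  have As: "PiE {..<n+m} A \<in> sets (PiM {..<n+m} (\<lambda>_. unif))"
    using A by (intro sets_PiM_I_finite) auto
  have seteq: "Zv n m -` PiE {..<n+m} A \<inter> space (MP n m)
      = PiE {..<n} A \<times> PiE {..<m} (\<lambda>i. A (n + i))"
  proof (intro set_eqI iffI)
    fix \<omega> assume a: "\<omega> \<in> Zv n m -` PiE {..<n+m} A \<inter> space (MP n m)"
    obtain U W where \<omega>: "\<omega> = (U, W)" by (cases \<omega>)
    have sp: "U \<in> PiE {..<n} (\<lambda>_. UNIV)" "W \<in> PiE {..<m} (\<lambda>_. UNIV)"
      using a by (auto simp: \<omega> MP_def space_pair_measure space_PiM)
    have z: "\<And>i. i < n + m \<Longrightarrow> Zv n m \<omega> i \<in> A i" using a by (auto simp: PiE_iff)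
    have "U i \<in> A i" if "i < n" for i using z[of i] that by (simp add: Zv_def \<omega>)
    moreover have "W i \<in> A (n + i)" if "i < m" for i using z[of "n+i"] that by (simp add: Zv_def \<omega>)
    ultimately show "\<omega> \<in> PiE {..<n} A \<times> PiE {..<m} (\<lambda>i. A (n + i))"
      using sp by (auto simp: \<omega> PiE_iff)
  next
    fix \<omega> assume a: "\<omega> \<in> PiE {..<n} A \<times> PiE {..<m} (\<lambda>i. A (n + i))"
    obtain U W where \<omega>: "\<omega> = (U, W)" by (cases \<omega>)
    have "Zv n m \<omega> i \<in> A i" if "i < n + m" for i
    proof (cases "i < n")
      case True then show ?thesis using a that by (auto simp: Zv_def \<omega> PiE_iff)
    next
      case False
      then have "i - n < m" "n + (i - n) = i" using that by auto
      moreover have "W (i - n) \<in> A (n + (i - n))" using a \<open>i - n < m\<close> by (auto simp: \<omega> PiE_iff)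
      ultimately show ?thesis using that False by (simp add: Zv_def \<omega>)
    qed
    moreover have "Zv n m \<omega> \<in> extensional {..<n+m}" by (simp add: Zv_def)
    ultimately have "Zv n m \<omega> \<in> PiE {..<n+m} A" by (auto simp: PiE_iff)
    moreover have "\<omega> \<in> space (MP n m)"
      using a by (auto simp: \<omega> MP_def space_pair_measure space_PiM PiE_iff)
    ultimately show "\<omega> \<in> Zv n m -` PiE {..<n+m} A \<inter> space (MP n m)" by simp
  qed
  have "emeasure (distr (MP n m) (PiM {..<n+m} (\<lambda>_. unif)) (Zv n m)) (PiE {..<n+m} A)
      = emeasure (MP n m) (PiE {..<n} A \<times> PiE {..<m} (\<lambda>i. A (n + i)))"
    by (simp add: emeasure_distr[OF Zv_meas As] seteq)
  also have "\<dots> = emeasure (PiM {..<n} (\<lambda>_. unif)) (PiE {..<n} A) * emeasure (PiM {..<m} (\<lambda>_. unif)) (PiE {..<m} (\<lambda>i. A (n + i)))"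
    unfolding MP_def using A by (intro P.M2.emeasure_pair_measure_Times sets_PiM_I_finite) auto
  also have "\<dots> = (\<Prod>i<n. emeasure unif (A i)) * (\<Prod>i<m. emeasure unif (A (n + i)))"
  proof -
    have A1: "\<And>i. i \<in> {..<n} \<Longrightarrow> A i \<in> sets unif" using A by auto
    have A2: "\<And>i. i \<in> {..<m} \<Longrightarrow> A (n + i) \<in> sets unif" using A by auto
    show ?thesis using unifP.emeasure_PiM[of "{..<n}" A, OF _ A1] unifP.emeasure_PiM[of "{..<m}" "\<lambda>i. A (n + i)", OF _ A2] by simp
  qed
  also have "\<dots> = (\<Prod>i<n+m. emeasure unif (A i))"
  proof -
    have "{..<n+m} = {..<n} \<union> (\<lambda>i. n + i) ` {..<m}"
    proof -
      have "x \<in> {..<n} \<union> (\<lambda>i. n + i) ` {..<m}" if "x < n + m" for x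
      proof (cases "x < n")
        case False then have "x = n + (x - n)" "x - n < m" using that by auto
        then show ?thesis by blast
      qed auto
      then show ?thesis by auto
    qed
    moreover have "(\<Prod>i\<in>(\<lambda>i. n + i) ` {..<m}. emeasure unif (A i)) = (\<Prod>i<m. emeasure unif (A (n + i)))"
      by (subst prod.reindex) (auto simp: inj_on_def)
    moreover have "(\<Prod>i\<in>{..<n} \<union> (\<lambda>i. n + i) ` {..<m}. emeasure unif (A i))
       = (\<Prod>i<n. emeasure unif (A i)) * (\<Prod>i\<in>(\<lambda>i. n + i) ` {..<m}. emeasure unif (A i))"
      by (rule prod.union_disjoint) auto
    ultimately show ?thesis by simp
  qed
  finally show "emeasure (distr (MP n m) (PiM {..<n+m} (\<lambda>_. unif)) (Zv n m)) (PiE {..<n+m} A)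
      = (\<Prod>i<n+m. emeasure unif (A i))" .
qed simp_all

lemma iid_exch0:
  assumes s: "\<sigma> permutes {..<n+m}"
  shows "distr (MP n m) (PiM {..<n+m} (\<lambda>_. borel)) (\<lambda>\<omega>. \<lambda>i\<in>{..<n+m}. SI n (\<sigma> i) \<omega>)
       = distr (PiM {..<n+m} (\<lambda>_. unif)) (PiM {..<n+m} (\<lambda>_. borel)) (\<lambda>x. \<lambda>i\<in>{..<n+m}. - x i)"
proof -
  define R where "R = (\<lambda>x::nat\<Rightarrow>real. \<lambda>i\<in>{..<n+m}. x (\<sigma> i))"
  define ng where "ng = (\<lambda>x::nat\<Rightarrow>real. \<lambda>i\<in>{..<n+m}. - x i)"
  have pin: "\<And>k. \<sigma> k < n + m \<longleftrightarrow> k < n + m" using permutes_in_image[OF s] by (metis lessThan_iff)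
  have eq: "(\<lambda>\<omega>. \<lambda>i\<in>{..<n+m}. SI n (\<sigma> i) \<omega>) = ng \<circ> (R \<circ> Zv n m)"
    by (auto simp: fun_eq_iff R_def ng_def Zv_def SI_def pin)
  have Rm: "R \<in> measurable (PiM {..<n+m} (\<lambda>_. unif)) (PiM {..<n+m} (\<lambda>_. unif))"
    unfolding R_def by (rule measurable_restrict, rule measurable_component_singleton) (simp add: pin)
  have ngm: "ng \<in> measurable (PiM {..<n+m} (\<lambda>_. unif)) (PiM {..<n+m} (\<lambda>_. borel))"
    unfolding ng_def by measurable
  have "distr (MP n m) (PiM {..<n+m} (\<lambda>_. borel)) (ng \<circ> (R \<circ> Zv n m))
      = distr (distr (distr (MP n m) (PiM {..<n+m} (\<lambda>_. unif)) (Zv n m)) (PiM {..<n+m} (\<lambda>_. unif)) R) (PiM {..<n+m} (\<lambda>_. borel)) ng"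
    by (simp add: distr_distr Zv_meas Rm ngm measurable_comp[OF Zv_meas Rm])
  also have "distr (MP n m) (PiM {..<n+m} (\<lambda>_. unif)) (Zv n m) = PiM {..<n+m} (\<lambda>_. unif)"
    by (rule Zv_distr)
  also have "distr (PiM {..<n+m} (\<lambda>_. unif)) (PiM {..<n+m} (\<lambda>_. unif)) R = PiM {..<n+m} (\<lambda>_. unif)"
    unfolding R_def
    using distr_PiM_reindex[of "{..<n+m}" "\<lambda>_. unif" \<sigma> "{..<n+m}"] prob_unif
      permutes_inj_on[OF s] pin by auto
  finally show ?thesis unfolding eq ng_def .
qed

lemma iid_exch:
  assumes s: "\<sigma> permutes {..<n+m}"
  shows "distr (MP n m) (PiM {..<n+m} (\<lambda>_. borel)) (\<lambda>\<omega>. \<lambda>i\<in>{..<n+m}. SI n (\<sigma> i) \<omega>)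
       = distr (MP n m) (PiM {..<n+m} (\<lambda>_. borel)) (\<lambda>\<omega>. \<lambda>i\<in>{..<n+m}. SI n i \<omega>)"
  using iid_exch0[OF s] iid_exch0[OF permutes_id] by simp

lemma AE_unif_ne: "AE y in unif. y \<noteq> c"
  unfolding unif_def by (intro AE_uniform_measureI) (auto intro: AE_mp[OF AE_lborel_singleton[of c]])

lemma AE_PiM_ne:
  assumes "i \<in> I" "j \<in> I" "i \<noteq> j"
  shows "AE x in PiM I (\<lambda>_::nat. unif). x i \<noteq> x j"
proof -
  interpret P: pair_sigma_finite unif "PiM (I - {i}) (\<lambda>_. unif)"
    by (simp add: pair_sigma_finite_def prob_space_imp_sigma_finite prob_PiM_unif prob_unif)
  have I: "insert i (I - {i}) = I" using assms by auto
  have D: "distr (unif \<Otimes>\<^sub>M PiM (I - {i}) (\<lambda>_. unif)) (PiM I (\<lambda>_. unif)) (\<lambda>(x, X). X(i := x)) = PiM I (\<lambda>_. unif)"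
    using distr_pair_PiM_eq_PiM[of "I - {i}" "\<lambda>_. unif" i] prob_unif unfolding I by simp
  have fm: "(\<lambda>(x, X). X(i := x)) \<in> measurable (unif \<Otimes>\<^sub>M PiM (I - {i}) (\<lambda>_. unif)) (PiM I (\<lambda>_. unif))"
  proof -
    have "(\<lambda>(x, X). X(i := x)) \<in> measurable (unif \<Otimes>\<^sub>M PiM (I - {i}) (\<lambda>_. unif)) (PiM (insert i (I - {i})) (\<lambda>_. unif))"
    proof -
      have eq: "(\<lambda>(x, X). X(i := x)) = (\<lambda>(f, y). f(i := y)) \<circ> (\<lambda>(x, X). (X, x))" by (auto simp: fun_eq_iff)
      have sw: "(\<lambda>(x, X). (X, x)) \<in> measurable (unif \<Otimes>\<^sub>M PiM (I - {i}) (\<lambda>_. unif)) (PiM (I - {i}) (\<lambda>_. unif) \<Otimes>\<^sub>M unif)"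
        by (rule measurable_pair_swap')
      show ?thesis unfolding eq by (rule measurable_comp[OF sw measurable_add_dim])
    qed
    then show ?thesis unfolding I .
  qed
  have ae1: "AE x in unif. AE X in PiM (I - {i}) (\<lambda>_. unif). x \<noteq> X j"
  proof (rule AE_I2)
    fix x
    show "AE X in PiM (I - {i}) (\<lambda>_. unif). x \<noteq> X j"
      using AE_PiM_component[of "I - {i}" "\<lambda>_. unif" j "\<lambda>y. x \<noteq> y"] prob_unif assms AE_unif_ne[of x]
      by (auto simp: eq_commute)
  qed
  have "AE p in unif \<Otimes>\<^sub>M PiM (I - {i}) (\<lambda>_. unif). fst p \<noteq> snd p j"
  proof (rule P.AE_pair_measure[where P="\<lambda>p. fst p \<noteq> snd p j"])
    have jm: "j \<in> I - {i}" using assms by auto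
    have [measurable]: "(\<lambda>X. X j) \<in> measurable (PiM (I - {i}) (\<lambda>_. unif)) borel"
      using measurable_component_singleton[OF jm, of "\<lambda>_. unif"] by (simp add: measurable_cong_sets[OF refl sets_unif])
    show "{p \<in> space (unif \<Otimes>\<^sub>M PiM (I - {i}) (\<lambda>_. unif)). fst p \<noteq> snd p j} \<in> sets (unif \<Otimes>\<^sub>M PiM (I - {i}) (\<lambda>_. unif))"
      by measurable
  qed (use ae1 in simp)
  then have ae2: "AE p in unif \<Otimes>\<^sub>M PiM (I - {i}) (\<lambda>_. unif). ((\<lambda>(x, X). X(i := x)) p) i \<noteq> ((\<lambda>(x, X). X(i := x)) p) j"
    by eventually_elim (use assms in auto)
  then have "AE x in distr (unif \<Otimes>\<^sub>M PiM (I - {i}) (\<lambda>_. unif)) (PiM I (\<lambda>_. unif)) (\<lambda>(x, X). X(i := x)). x i \<noteq> x j"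
  proof -
    have [measurable]: "(\<lambda>x. x i) \<in> measurable (PiM I (\<lambda>_. borel)) borel" "(\<lambda>x. x j) \<in> measurable (PiM I (\<lambda>_. borel)) borel"
      using measurable_component_singleton[OF assms(1), of "\<lambda>_. borel"] measurable_component_singleton[OF assms(2), of "\<lambda>_. borel"]
      by simp_all
    have se: "sets (PiM I (\<lambda>_. unif)) = sets (PiM I (\<lambda>_. borel))" by (rule sets_PiM_cong) auto
    have Pm: "{x \<in> space (PiM I (\<lambda>_. unif)). x i \<noteq> x j} \<in> sets (PiM I (\<lambda>_. unif))"
      unfolding se sets_eq_imp_space_eq[OF se] by (rule borel_measurable_neq) measurable
    show ?thesis using ae2 by (subst AE_distr_iff[OF fm Pm]) auto
  qed
  then show ?thesis unfolding D .
qed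

lemma iid_noties: "AE \<omega> in MP n m. \<forall>i<n + m. \<forall>j<n + m. i \<noteq> j \<longrightarrow> SI n i \<omega> \<noteq> SI n j \<omega>"
proof -
  have "AE x in PiM {..<n+m} (\<lambda>_::nat. unif). \<forall>i\<in>{..<n+m}. \<forall>j\<in>{..<n+m}. i \<noteq> j \<longrightarrow> x i \<noteq> x j"
    by (intro AE_finite_allI) (auto intro: AE_PiM_ne)
  then have "AE x in distr (MP n m) (PiM {..<n+m} (\<lambda>_. unif)) (Zv n m). \<forall>i\<in>{..<n+m}. \<forall>j\<in>{..<n+m}. i \<noteq> j \<longrightarrow> x i \<noteq> x j"
    unfolding Zv_distr .
  from AE_distrD[OF Zv_meas this]
  show ?thesis
  proof eventually_elim
    case (elim \<omega>)
    have "SI n k \<omega> = - Zv n m \<omega> k" if "k < n + m" for k using that by (simp add: SI_def Zv_def)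
    then show ?case using elim by auto
  qed
qed

lemma tele:
  fixes f :: "nat \<Rightarrow> real"
  assumes "a \<le> b"
  shows "(\<Sum>l\<in>{a<..b}. f l - f (l - 1)) = f b - f a"
  using assms
proof (induct b rule: dec_induct)
  case (step b)
  have "{a<..Suc b} = insert (Suc b) {a<..b}" using step(1) by auto
  then show ?case using step by simp
qed simp

lemma sets_PU[simp, measurable_cong]: "sets (PU n U) = sets borel"
  unfolding PU_def using sets_measure_of[of "sets borel" UNIV] sets.sigma_sets_eq[of borel] by simp

lemma space_PU[simp]: "space (PU n U) = UNIV"
  using sets_eq_imp_space_eq[OF sets_PU] by simp

lemma emeasure_PU:
  assumes A: "A \<in> sets borel"
  shows "emeasure (PU n U) A = (\<Sum>l\<in>{1..n+1}. ennreal (ord_stat n U l - ord_stat n U (l - 1)) * indicator A (real l / real (n + 1)))"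
  unfolding PU_def
proof (rule emeasure_measure_of_sigma)
  show "sigma_algebra UNIV (sets borel)" using sets.sigma_algebra_axioms[of borel] by simp
  show "positive (sets borel) (\<lambda>A. \<Sum>l\<in>{1..n+1}. ennreal (ord_stat n U l - ord_stat n U (l - 1)) * indicator A (real l / real (n + 1)))"
    by (simp add: positive_def)
  show "countably_additive (sets borel) (\<lambda>A. \<Sum>l\<in>{1..n+1}. ennreal (ord_stat n U l - ord_stat n U (l - 1)) * indicator A (real l / real (n + 1)))"
    unfolding countably_additive_def
  proof (intro allI impI)
    fix F :: "nat \<Rightarrow> real set" assume F: "range F \<subseteq> sets borel" "disjoint_family F"
    have "(\<Sum>i. \<Sum>l\<in>{1..n+1}. ennreal (ord_stat n U l - ord_stat n U (l - 1)) * indicator (F i) (real l / real (n + 1)))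
       = (\<Sum>l\<in>{1..n+1}. \<Sum>i. ennreal (ord_stat n U l - ord_stat n U (l - 1)) * indicator (F i) (real l / real (n + 1)))"
      by (rule suminf_sum) simp
    also have "\<dots> = (\<Sum>l\<in>{1..n+1}. ennreal (ord_stat n U l - ord_stat n U (l - 1)) * indicator (\<Union>i. F i) (real l / real (n + 1)))"
      using suminf_indicator[OF F(2)] by simp
    finally show "(\<Sum>i. \<Sum>l\<in>{1..n+1}. ennreal (ord_stat n U l - ord_stat n U (l - 1)) * indicator (F i) (real l / real (n + 1)))
       = (\<Sum>l\<in>{1..n+1}. ennreal (ord_stat n U l - ord_stat n U (l - 1)) * indicator (\<Union>i. F i) (real l / real (n + 1)))" .
  qed
qed (rule A)

definition srt :: "nat \<Rightarrow> (nat \<Rightarrow> real) \<Rightarrow> real list" where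
  "srt n U = sort (map U [0..<n])"

lemma srt_props: "length (srt n U) = n" "sorted (srt n U)" "set (srt n U) = U ` {..<n}"
  by (auto simp: srt_def)

lemma ord_stat_srt: "1 \<le> k \<Longrightarrow> k \<le> n \<Longrightarrow> ord_stat n U k = srt n U ! (k - 1)"
  by (simp add: ord_stat_def srt_def)

lemma cnt_srt: "card {j. j < n \<and> U j \<le> v} = card {i. i < n \<and> srt n U ! i \<le> v}"
proof -
  have e: "{i. i < n \<and> map U [0..<n] ! i \<le> v} = {j. j < n \<and> U j \<le> v}" by auto
  have "card {j. j < n \<and> U j \<le> v} = length (filter (\<lambda>x. x \<le> v) (map U [0..<n]))"
    by (simp add: length_filter_conv_card e)
  also have "\<dots> = length (filter (\<lambda>x. x \<le> v) (srt n U))"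
    unfolding srt_def by (metis mset_filter mset_sort size_mset)
  also have "\<dots> = card {i. i < n \<and> srt n U ! i \<le> v}"
    by (simp add: length_filter_conv_card srt_props)
  finally show ?thesis .
qed

lemma cnt_le_iff:
  assumes "1 \<le> k" "k \<le> n"
  shows "k \<le> card {j. j < n \<and> U j \<le> v} \<longleftrightarrow> ord_stat n U k \<le> v"
proof -
  let ?s = "srt n U"
  have ls: "length ?s = n" and ss: "sorted ?s" by (rule srt_props)+
  have os: "ord_stat n U k = ?s ! (k - 1)" using assms by (rule ord_stat_srt)
  show ?thesis unfolding cnt_srt[of n U v] os
  proof
    assume "?s ! (k - 1) \<le> v"
    have "{..<k} \<subseteq> {i. i < n \<and> ?s ! i \<le> v}"
    proof
      fix i assume "i \<in> {..<k}"
      then have i: "i \<le> k - 1" "k - 1 < n" using assms by auto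
      have "?s ! i \<le> ?s ! (k - 1)" using sorted_nth_mono[OF ss i(1)] i(2) ls by simp
      then show "i \<in> {i. i < n \<and> ?s ! i \<le> v}" using i \<open>?s ! (k - 1) \<le> v\<close> by simp
    qed
    then have "card {..<k} \<le> card {i. i < n \<and> ?s ! i \<le> v}" by (intro card_mono) auto
    then show "k \<le> card {i. i < n \<and> ?s ! i \<le> v}" by simp
  next
    assume k: "k \<le> card {i. i < n \<and> ?s ! i \<le> v}"
    show "?s ! (k - 1) \<le> v"
    proof (rule ccontr)
      assume "\<not> ?s ! (k - 1) \<le> v"
      then have gt: "v < ?s ! (k - 1)" by simp
      have "{i. i < n \<and> ?s ! i \<le> v} \<subseteq> {..<k - 1}"
      proof
        fix i assume "i \<in> {i. i < n \<and> ?s ! i \<le> v}"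
        then have i: "i < n" "?s ! i \<le> v" by auto
        show "i \<in> {..<k - 1}"
        proof (rule ccontr)
          assume "i \<notin> {..<k - 1}"
          then have "k - 1 \<le> i" by simp
          then have "?s ! (k - 1) \<le> ?s ! i" using sorted_nth_mono[OF ss] i(1) ls by simp
          then show False using i(2) gt by simp
        qed
      qed
      then have "card {i. i < n \<and> ?s ! i \<le> v} \<le> card {..<k - 1}" by (intro card_mono) auto
      then show False using k assms by simp
    qed
  qed
qed

lemma ord_stat_01:
  assumes "\<forall>j<n. U j \<in> {0..1}"
  shows "0 \<le> ord_stat n U k \<and> ord_stat n U k \<le> 1"
proof (cases "1 \<le> k \<and> k \<le> n")
  case True
  then have "srt n U ! (k - 1) \<in> set (srt n U)" by (intro nth_mem) (auto simp: srt_props)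
  then have "srt n U ! (k - 1) \<in> U ` {..<n}" by (simp add: srt_props)
  then show ?thesis using assms True by (auto simp: ord_stat_srt)
qed (auto simp: ord_stat_def)

lemma ord_stat_mono:
  assumes "\<forall>j<n. U j \<in> {0..1}" "k \<le> l"
  shows "ord_stat n U k \<le> ord_stat n U l"
proof -
  have "ord_stat n U k \<le> ord_stat n U l" if "1 \<le> k" "l \<le> n"
    using that assms(2) sorted_nth_mono[OF srt_props(2), of "k - 1" "l - 1" n U]
    by (simp add: ord_stat_srt srt_props)
  then show ?thesis using ord_stat_01[OF assms(1), of k] ord_stat_01[OF assms(1), of l] assms(2)
    by (cases "k = 0"; cases "l \<ge> n + 1") (auto simp: ord_stat_def)
qed

definition gq :: "nat \<Rightarrow> (nat \<Rightarrow> real) \<Rightarrow> real \<Rightarrow> real" where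
  "gq n U v = (1 + (\<Sum>j<n. if U j \<le> v then 1 else 0)) / real (n + 1)"

lemma gq_card: "gq n U v = real (card {j. j < n \<and> U j \<le> v} + 1) / real (n + 1)"
proof -
  have "card {j. j < n \<and> U j \<le> v} = card {j\<in>{..<n}. U j \<le> v}"
    by (rule arg_cong[where f=card]) auto
  then show ?thesis by (simp add: gq_def sum.If_cases Int_def)
qed

lemma gq_meas[measurable]: "gq n U \<in> borel_measurable borel"
  unfolding gq_def by measurable

lemma distr_unif_gq:
  assumes U01: "\<forall>j<n. U j \<in> {0..1}"
  shows "distr unif borel (gq n U) = PU n U"
proof (rule measure_eqI)
  show "sets (distr unif borel (gq n U)) = sets (PU n U)" by simp
  fix A assume "A \<in> sets (distr unif borel (gq n U))"
  then have A: "A \<in> sets borel" by simp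
  define cnt where "cnt v = card {j. j < n \<and> U j \<le> v}" for v
  define os where "os = ord_stat n U"
  have cnt_le: "cnt v \<le> n" for v
  proof -
    have "cnt v \<le> card {..<n}" unfolding cnt_def by (intro card_mono) auto
    then show ?thesis by simp
  qed
  define T where "T k = {v. k \<le> cnt v}" for k
  have T_eq: "T k = (if k = 0 then UNIV else if k \<le> n then {os k..} else {})" for k
  proof (cases "k = 0")
    case False
    show ?thesis
    proof (cases "k \<le> n")
      case True
      then show ?thesis using False cnt_le_iff[of k n U] by (auto simp: T_def cnt_def os_def)
    next
      case F2: False
      have "\<not> k \<le> cnt v" for v using F2 cnt_le[of v] by linarith
      then show ?thesis using False F2 by (auto simp: T_def)
    qed
  qed (simp add: T_def)
  have Ts: "T k \<in> sets borel" for k by (simp add: T_eq)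
  have o01: "0 \<le> os k" "os k \<le> 1" for k using ord_stat_01[OF U01, of k] by (auto simp: os_def)
  have os0: "os 0 = 0" and osn: "os (n + 1) = 1" by (simp_all add: os_def ord_stat_def)
  have uT: "emeasure unif (T k) = ennreal (1 - os k)" if "k \<le> n + 1" for k
  proof -
    show ?thesis
    proof (cases "k = 0")
      case True
      then show ?thesis using prob_space.emeasure_space_1[OF prob_unif] os0 by (simp add: T_eq)
    next
      case False
      show ?thesis
      proof (cases "k \<le> n")
        case True
        then have Tk: "T k = {os k..}" using False by (simp add: T_eq)
        have "{0..1} \<inter> {os k..} = {os k..1}" using o01[of k] by auto
        then show ?thesis unfolding Tk unif_def using o01[of k]
          by (simp add: emeasure_uniform_measure divide_ennreal_def)
      next
        case F2: False
        then have "k = n + 1" using that by simp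
        then show ?thesis using osn by (simp add: T_eq)
      qed
    qed
  qed
  have uE: "emeasure unif {v. cnt v = k} = ennreal (os (k + 1) - os k)" if "k \<le> n" for k
  proof -
    have "{v. cnt v = k} = T k - T (Suc k)" by (auto simp: T_def)
    moreover have "emeasure unif (T k - T (Suc k)) = emeasure unif (T k) - emeasure unif (T (Suc k))"
      by (rule emeasure_Diff) (use Ts uT that in \<open>auto simp: T_def\<close>)
    moreover have "ennreal (1 - os k) - ennreal (1 - os (Suc k)) = ennreal (os (k + 1) - os k)"
      using o01[of "Suc k"] by (subst ennreal_minus) auto
    ultimately show ?thesis using uT[of k] uT[of "Suc k"] that by simp
  qed
  have Es: "{v. cnt v = k} \<in> sets unif" for k
  proof -
    have "{v. cnt v = k} = T k - T (Suc k)" by (auto simp: T_def)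
    then show ?thesis using Ts by simp
  qed
  define L where "L = {l \<in> {1..n+1}. real l / real (n + 1) \<in> A}"
  have gq_eq: "gq n U v = real (cnt v + 1) / real (n + 1)" for v by (simp add: gq_card cnt_def)
  have pre: "gq n U -` A \<inter> space unif = (\<Union>l\<in>L. {v. cnt v = l - 1})"
  proof (intro set_eqI iffI)
    fix v assume "v \<in> gq n U -` A \<inter> space unif"
    then have "real (cnt v + 1) / real (n + 1) \<in> A" by (simp add: gq_eq)
    then have "cnt v + 1 \<in> L" using cnt_le[of v] by (simp add: L_def)
    then show "v \<in> (\<Union>l\<in>L. {v. cnt v = l - 1})" by force
  next
    fix v assume "v \<in> (\<Union>l\<in>L. {v. cnt v = l - 1})"
    then obtain l where l: "l \<in> L" "cnt v = l - 1" by auto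
    then have "cnt v + 1 = l" by (simp add: L_def)
    then show "v \<in> gq n U -` A \<inter> space unif" using l by (simp add: gq_eq L_def)
  qed
  have finL: "finite L" by (simp add: L_def)
  have "emeasure (distr unif borel (gq n U)) A = emeasure unif (gq n U -` A \<inter> space unif)"
    by (rule emeasure_distr) (simp_all add: A measurable_cong_sets[OF sets_unif refl])
  also have "\<dots> = (\<Sum>l\<in>L. emeasure unif {v. cnt v = l - 1})"
    unfolding pre
    by (rule sum_emeasure[symmetric]) (use Es finL in \<open>auto simp: disjoint_family_on_def L_def\<close>)
  also have "\<dots> = (\<Sum>l\<in>L. ennreal (os l - os (l - 1)))"
    by (intro sum.cong refl) (auto simp: L_def uE)
  also have "\<dots> = (\<Sum>l\<in>{1..n+1}. ennreal (os l - os (l - 1)) * indicator A (real l / real (n + 1)))"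
  proof -
    have "(\<Sum>l\<in>L. ennreal (os l - os (l - 1))) = (\<Sum>l\<in>{1..n+1}. if real l / real (n + 1) \<in> A then ennreal (os l - os (l - 1)) else 0)"
      unfolding L_def by (rule sum.inter_filter) simp
    also have "\<dots> = (\<Sum>l\<in>{1..n+1}. ennreal (os l - os (l - 1)) * indicator A (real l / real (n + 1)))"
      by (intro sum.cong refl) (simp add: indicator_def)
    finally show ?thesis .
  qed
  also have "\<dots> = emeasure (PU n U) A"
    using emeasure_PU[OF A, of n U] by (simp add: os_def)
  finally show "emeasure (distr unif borel (gq n U)) A = emeasure (PU n U) A" .
qed

lemma PU_mass: "emeasure (PU n U) UNIV = ennreal (\<Sum>l\<in>{1..n+1}. max 0 (ord_stat n U l - ord_stat n U (l - 1)))"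
proof -
  have "emeasure (PU n U) UNIV = (\<Sum>l\<in>{1..n+1}. ennreal (ord_stat n U l - ord_stat n U (l - 1)))"
    using emeasure_PU[of UNIV n U] by simp
  also have "\<dots> = (\<Sum>l\<in>{1..n+1}. ennreal (max 0 (ord_stat n U l - ord_stat n U (l - 1))))"
    by (simp add: ennreal_max_0)
  also have "\<dots> = ennreal (\<Sum>l\<in>{1..n+1}. max 0 (ord_stat n U l - ord_stat n U (l - 1)))"
    by (rule sum_ennreal) simp
  finally show ?thesis .
qed

lemma PU_mass_gt1:
  assumes "\<not> (\<forall>j<n. U j \<in> {0..1})"
  shows "(\<Sum>l\<in>{1..n+1}. max 0 (ord_stat n U l - ord_stat n U (l - 1))) > 1"
proof -
  define d where "d l = ord_stat n U l - ord_stat n U (l - 1)" for l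
  let ?s = "srt n U"
  have ls: "length ?s = n" and ss: "sorted ?s" by (rule srt_props)+
  obtain j where j: "j < n" "U j < 0 \<or> U j > 1" using assms by force
  have "U j \<in> set ?s" using j(1) by (simp add: srt_props)
  then obtain i where i: "i < n" "?s ! i = U j" using ls by (auto simp: in_set_conv_nth)
  have low: "(\<Sum>l\<in>{1..n+1}. max 0 (d l)) \<ge> (\<Sum>l\<in>{a<..b}. d l)" if "b \<le> n + 1" for a b
  proof -
    have "(\<Sum>l\<in>{a<..b}. d l) \<le> (\<Sum>l\<in>{a<..b}. max 0 (d l))" by (intro sum_mono) simp
    also have "\<dots> \<le> (\<Sum>l\<in>{1..n+1}. max 0 (d l))"
      using that by (intro sum_mono2) auto
    finally show ?thesis .
  qed
  from j(2) show ?thesis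
  proof
    assume neg: "U j < 0"
    have "?s ! 0 \<le> ?s ! i" using sorted_nth_mono[OF ss, of 0 i] i ls by simp
    moreover have "ord_stat n U 1 = ?s ! 0" using ord_stat_srt[of 1 n U] j(1) by simp
    moreover have "(\<Sum>l\<in>{1<..n+1}. d l) = ord_stat n U (n + 1) - ord_stat n U 1"
      unfolding d_def by (rule tele) simp
    moreover have "ord_stat n U (n + 1) = 1" by (simp add: ord_stat_def)
    ultimately have "(\<Sum>l\<in>{1<..n+1}. d l) > 1" using neg i by simp
    then show ?thesis using low[of "n + 1" 1] by (simp add: d_def)
  next
    assume pos: "U j > 1"
    have "?s ! i \<le> ?s ! (n - 1)" using sorted_nth_mono[OF ss, of i "n - 1"] i ls by simp
    moreover have "ord_stat n U n = ?s ! (n - 1)" using ord_stat_srt[of n n U] j(1) by simp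
    moreover have "(\<Sum>l\<in>{0<..n}. d l) = ord_stat n U n - ord_stat n U 0"
      unfolding d_def by (rule tele) simp
    moreover have "ord_stat n U 0 = 0" by (simp add: ord_stat_def)
    ultimately have "(\<Sum>l\<in>{0<..n}. d l) > 1" using pos i by simp
    then show ?thesis using low[of n 0] by (simp add: d_def)
  qed
qed

lemma not_subprob:
  assumes "\<not> (\<forall>j<n. U j \<in> {0..1})" "m \<ge> 1"
  shows "\<not> subprob_space (PiM {..<m} (\<lambda>_::nat. PU n U))"
proof
  assume sp: "subprob_space (PiM {..<m} (\<lambda>_::nat. PU n U))"
  define r where "r = (\<Sum>l\<in>{1..n+1}. max 0 (ord_stat n U l - ord_stat n U (l - 1)))"
  have r1: "r > 1" unfolding r_def by (rule PU_mass_gt1[OF assms(1)])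
  have mass: "emeasure (PU n U) UNIV = ennreal r" by (simp add: PU_mass r_def)
  interpret F: finite_measure "PU n U" by (rule finite_measureI) (simp add: mass)
  interpret PS: product_sigma_finite "\<lambda>_::nat. PU n U"
    unfolding product_sigma_finite_def by (simp add: F.sigma_finite_measure_axioms)
  have "emeasure (PiM {..<m} (\<lambda>_::nat. PU n U)) (PiE {..<m} (\<lambda>_. UNIV)) = (\<Prod>i<m. emeasure (PU n U) UNIV)"
    by (rule PS.emeasure_PiM) auto
  also have "\<dots> = ennreal (r ^ m)" using ennreal_power[of r m] r1 by (simp add: mass)
  finally have e: "emeasure (PiM {..<m} (\<lambda>_::nat. PU n U)) (space (PiM {..<m} (\<lambda>_::nat. PU n U))) = ennreal (r ^ m)"
    by (simp add: space_PiM)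
  have "r ^ m > 1" using r1 assms(2) by (intro one_less_power) auto
  then have "ennreal (r ^ m) > 1" by simp
  then show False using subprob_space.emeasure_space_le_1[OF sp] e by simp
qed

lemma pair_distr_bind:
  assumes p1: "prob_space M1" and p2: "prob_space M2"
    and f: "(\<lambda>(x, y). f x y) \<in> measurable (M1 \<Otimes>\<^sub>M M2) K"
  shows "distr (M1 \<Otimes>\<^sub>M M2) K (\<lambda>(x, y). f x y) = M1 \<bind> (\<lambda>x. distr M2 K (f x))"
proof (rule measure_eqI)
  interpret P: pair_prob_space M1 M2
    using p1 p2 by (simp add: pair_prob_space_def pair_sigma_finite_def prob_space_imp_sigma_finite)
  have ne: "space M1 \<noteq> {}" by (rule P.M1.not_empty)
  have km: "(\<lambda>x. distr M2 K (f x)) \<in> measurable M1 (subprob_algebra K)"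
    by (rule measurable_distr2[OF f]) (rule measurable_const, rule P.M2.M_in_subprob)
  show "sets (distr (M1 \<Otimes>\<^sub>M M2) K (\<lambda>(x, y). f x y)) = sets (M1 \<bind> (\<lambda>x. distr M2 K (f x)))"
    using ne by (subst sets_bind[where N=K]) auto
  fix A assume "A \<in> sets (distr (M1 \<Otimes>\<^sub>M M2) K (\<lambda>(x, y). f x y))"
  then have A: "A \<in> sets K" by simp
  have fx: "f x \<in> measurable M2 K" if "x \<in> space M1" for x
    using measurable_Pair2[OF f that] by simp
  have "emeasure (distr (M1 \<Otimes>\<^sub>M M2) K (\<lambda>(x, y). f x y)) A
      = emeasure (M1 \<Otimes>\<^sub>M M2) ((\<lambda>(x, y). f x y) -` A \<inter> space (M1 \<Otimes>\<^sub>M M2))"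
    by (rule emeasure_distr[OF f A])
  also have "\<dots> = (\<integral>\<^sup>+x. emeasure M2 (Pair x -` ((\<lambda>(x, y). f x y) -` A \<inter> space (M1 \<Otimes>\<^sub>M M2))) \<partial>M1)"
    by (rule P.M2.emeasure_pair_measure_alt) (rule measurable_sets[OF f A])
  also have "\<dots> = (\<integral>\<^sup>+x. emeasure (distr M2 K (f x)) A \<partial>M1)"
  proof (rule nn_integral_cong)
    fix x assume x: "x \<in> space M1"
    have "Pair x -` ((\<lambda>(x, y). f x y) -` A \<inter> space (M1 \<Otimes>\<^sub>M M2)) = f x -` A \<inter> space M2"
      using x by (auto simp: space_pair_measure)
    then show "emeasure M2 (Pair x -` ((\<lambda>(x, y). f x y) -` A \<inter> space (M1 \<Otimes>\<^sub>M M2))) = emeasure (distr M2 K (f x)) A"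
      by (simp add: emeasure_distr[OF fx[OF x] A])
  qed
  also have "\<dots> = emeasure (M1 \<bind> (\<lambda>x. distr M2 K (f x))) A"
    by (rule emeasure_bind[OF ne km A, symmetric])
  finally show "emeasure (distr (M1 \<Otimes>\<^sub>M M2) K (\<lambda>(x, y). f x y)) A = emeasure (M1 \<bind> (\<lambda>x. distr M2 K (f x))) A" .
qed

lemma gq_joint_meas:
  fixes n m :: nat
  shows "(\<lambda>(U, W). \<lambda>i\<in>{..<m}. gq n U (W i)) \<in> measurable (PiM {..<n} (\<lambda>_. unif) \<Otimes>\<^sub>M PiM {..<m} (\<lambda>_. unif)) (PiM {..<m} (\<lambda>_. borel))"
proof -
  let ?P = "PiM {..<n} (\<lambda>_. unif) \<Otimes>\<^sub>M PiM {..<m} (\<lambda>_::nat. unif)"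
  have eq: "(\<lambda>(U, W). \<lambda>i\<in>{..<m}. gq n U (W i)) = (\<lambda>p. \<lambda>i\<in>{..<m}. gq n (fst p) (snd p i))" by auto
  show ?thesis unfolding eq
  proof (rule measurable_restrict)
    fix i assume i: "i \<in> {..<m}"
    have [measurable]: "(\<lambda>p. snd p i) \<in> borel_measurable ?P"
      using measurable_compose[OF measurable_snd measurable_component_singleton[OF i, of "\<lambda>_. unif"]]
      by (simp add: measurable_cong_sets[OF refl sets_unif])
    have tm: "(\<lambda>p. if fst p j \<le> snd p i then 1 else 0 :: real) \<in> borel_measurable ?P" if j: "j \<in> {..<n}" for j
    proof -
      have [measurable]: "(\<lambda>p. fst p j) \<in> borel_measurable ?P"
        using measurable_compose[OF measurable_fst measurable_component_singleton[OF j, of "\<lambda>_. unif"]]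
        by (simp add: measurable_cong_sets[OF refl sets_unif])
      show ?thesis by measurable
    qed
    show "(\<lambda>p. gq n (fst p) (snd p i)) \<in> borel_measurable ?P"
      unfolding gq_def
      by (intro borel_measurable_divide borel_measurable_add borel_measurable_const borel_measurable_sum tm)
  qed
qed

lemma bind_G:
  fixes n m :: nat
  assumes m: "m \<ge> 1"
  shows "PiM {..<n} (\<lambda>_. unif) \<bind> (\<lambda>U. PiM {..<m} (\<lambda>_::nat. PU n U))
       = PiM {..<n} (\<lambda>_. unif) \<bind> (\<lambda>U. distr (PiM {..<m} (\<lambda>_. unif)) (PiM {..<m} (\<lambda>_. borel)) (\<lambda>W. \<lambda>i\<in>{..<m}. gq n U (W i)))"
proof -
  let ?M1 = "PiM {..<n} (\<lambda>_::nat. unif)"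
  let ?K1 = "\<lambda>U. PiM {..<m} (\<lambda>_::nat. PU n U)"
  let ?K2 = "\<lambda>U. distr (PiM {..<m} (\<lambda>_::nat. unif)) (PiM {..<m} (\<lambda>_. borel)) (\<lambda>W. \<lambda>i\<in>{..<m}. gq n U (W i))"
  let ?PB = "PiM {..<m} (\<lambda>_::nat. borel :: real measure)"
  let ?SA = "subprob_algebra ?PB"
  have ne: "space ?M1 \<noteq> {}" using prob_space.not_empty[OF prob_PiM_unif] .
  have sK1: "sets (?K1 x) = sets ?PB" for x by (rule sets_PiM_cong) simp_all
  have sK2: "sets (?K2 x) = sets ?PB" for x by simp
  have K2m: "?K2 \<in> measurable ?M1 ?SA"
  proof (rule measurable_distr2)
    show "(\<lambda>(U, W). \<lambda>i\<in>{..<m}. gq n U (W i)) \<in> measurable (?M1 \<Otimes>\<^sub>M PiM {..<m} (\<lambda>_. unif)) ?PB"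
      by (rule gq_joint_meas)
    show "(\<lambda>x. PiM {..<m} (\<lambda>_. unif)) \<in> measurable ?M1 (subprob_algebra (PiM {..<m} (\<lambda>_. unif)))"
      by (rule measurable_const, rule prob_space.M_in_subprob[OF prob_PiM_unif])
  qed
  define G where "G = PiE {..<n} (\<lambda>_::nat. {0..1::real})"
  have Gs: "G \<in> sets ?M1" unfolding G_def by (rule sets_PiM_I_finite) auto
  have Gsp: "G \<subseteq> space ?M1" by (auto simp: G_def space_PiM)
  have G_iff: "U \<in> G \<longleftrightarrow> (\<forall>j<n. U j \<in> {0..1})" if "U \<in> space ?M1" for U
    using that by (auto simp: G_def space_PiM PiE_iff)
  have AEG: "AE U in ?M1. U \<in> G"
  proof -
    have "AE x in unif. x \<in> {0..1}" unfolding unif_def by (rule AE_uniform_measureI) auto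
    then have "AE U in ?M1. \<forall>j\<in>{..<n}. U j \<in> {0..1}"
      by (intro AE_finite_allI) (auto intro: AE_PiM_component prob_unif)
    with AE_space show ?thesis
    proof eventually_elim
      case (elim U)
      then show ?case using G_iff[of U] by simp
    qed
  qed
  have Keq: "?K1 U = ?K2 U" if U: "U \<in> G" for U
  proof -
    have U01: "\<forall>j<n. U j \<in> {0..1}" using U unfolding G_def by (simp add: PiE_iff)
    have D: "distr unif borel (gq n U) = PU n U" by (rule distr_unif_gq[OF U01])
    have pPU: "prob_space (PU n U)" using prob_space.prob_space_distr[OF prob_unif, of "gq n U" borel] D
      by (simp add: measurable_cong_sets[OF sets_unif refl])
    have gm: "gq n U \<in> measurable unif (PU n U)"
      by (simp add: measurable_cong_sets[OF sets_unif sets_PU])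
    have e1: "distr (PiM {..<m} (\<lambda>_. unif)) (PiM {..<m} (\<lambda>_. PU n U)) (compose {..<m} (gq n U))
        = PiM {..<m} (\<lambda>i. distr unif (PU n U) (gq n U))"
      by (rule distr_PiM_finite_prob_space') (simp_all only: finite_lessThan prob_unif pPU gm)
    have e2: "distr unif (PU n U) (gq n U) = PU n U"
      using D by (metis distr_cong sets_PU)
    have e3: "distr (PiM {..<m} (\<lambda>_. unif)) (PiM {..<m} (\<lambda>_. PU n U)) (compose {..<m} (gq n U))
        = ?K2 U"
      by (rule distr_cong) (auto simp: compose_def sK1)
    show ?thesis using e1 e2 e3 by metis
  qed
  have notK1: "?K1 U \<notin> space ?SA" if "U \<in> space ?M1" "U \<notin> G" for U
    using not_subprob[OF _ m, of n U] G_iff[OF that(1)] that(2) by (auto simp: space_subprob_algebra)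
  have key: "emeasure ?M1 (?K1 -` a \<inter> space ?M1) = emeasure ?M1 (?K2 -` a \<inter> space ?M1)"
    if a: "a \<in> sets ?SA" for a
  proof -
    have "?K1 -` a \<inter> space ?M1 = (?K2 -` a \<inter> space ?M1) \<inter> G"
    proof (intro set_eqI iffI)
      fix U assume U: "U \<in> ?K1 -` a \<inter> space ?M1"
      have "U \<in> G"
      proof (rule ccontr)
        assume "U \<notin> G"
        then have "?K1 U \<notin> space ?SA" using notK1 U by auto
        then show False using U sets.sets_into_space[OF a] by auto
      qed
      then show "U \<in> (?K2 -` a \<inter> space ?M1) \<inter> G" using U Keq by auto
    next
      fix U assume "U \<in> (?K2 -` a \<inter> space ?M1) \<inter> G"
      then show "U \<in> ?K1 -` a \<inter> space ?M1" using Keq by auto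
    qed
    also have "emeasure ?M1 \<dots> = emeasure ?M1 (?K2 -` a \<inter> space ?M1)"
    proof (rule emeasure_eq_AE)
      show "AE x in ?M1. (x \<in> ?K2 -` a \<inter> space ?M1 \<inter> G) = (x \<in> ?K2 -` a \<inter> space ?M1)"
        using AEG by eventually_elim auto
      show "?K2 -` a \<inter> space ?M1 \<inter> G \<in> sets ?M1" using measurable_sets[OF K2m a] Gs by auto
      show "?K2 -` a \<inter> space ?M1 \<in> sets ?M1" using measurable_sets[OF K2m a] .
    qed
    finally show ?thesis .
  qed
  have dist_eq: "distr ?M1 ?SA ?K1 = distr ?M1 ?SA ?K2"
    unfolding distr_def[of ?M1 ?SA ?K1] distr_def[of ?M1 ?SA ?K2]
    by (rule measure_of_eq[OF sets.space_closed]) (simp add: key sets.sigma_sets_eq)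
  have SA1: "subprob_algebra (?K1 (SOME x. x \<in> space ?M1)) = ?SA" by (rule subprob_algebra_cong[OF sK1])
  have SA2: "subprob_algebra (?K2 (SOME x. x \<in> space ?M1)) = ?SA" by (rule subprob_algebra_cong[OF sK2])
  show ?thesis unfolding bind_def using ne SA1 SA2 dist_eq by simp
qed

theorem proposition2:
  fixes M :: "'w measure" and S :: "nat \<Rightarrow> 'w \<Rightarrow> real" and n m :: nat
  assumes "prob_space M"
    and "n \<ge> 1" and "m \<ge> 1"
    and meas: "\<And>i. i < n + m \<Longrightarrow> S i \<in> borel_measurable M"
    and exch: "\<And>\<sigma>. \<sigma> permutes {..<n + m} \<Longrightarrow>
        distr M (PiM {..<n + m} (\<lambda>_. borel)) (\<lambda>\<omega>. \<lambda>i\<in>{..<n + m}. S (\<sigma> i) \<omega>)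
      = distr M (PiM {..<n + m} (\<lambda>_. borel)) (\<lambda>\<omega>. \<lambda>i\<in>{..<n + m}. S i \<omega>)"
    and no_ties: "AE \<omega> in M. \<forall>i<n + m. \<forall>j<n + m. i \<noteq> j \<longrightarrow> S i \<omega> \<noteq> S j \<omega>"
  shows "distr M (PiM {..<m} (\<lambda>_. borel))
           (\<lambda>\<omega>. \<lambda>i\<in>{..<m}. conf_pval n (\<lambda>k. S k \<omega>) i) = P_nm n m"
proof -
  let ?PB = "PiM {..<m} (\<lambda>_::nat. borel :: real measure)"
  have "distr M ?PB (\<lambda>\<omega>. \<lambda>i\<in>{..<m}. conf_pval n (\<lambda>k. S k \<omega>) i)
      = distr (MP n m) ?PB (\<lambda>\<omega>. \<lambda>i\<in>{..<m}. conf_pval n (\<lambda>k. SI n k \<omega>) i)"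
  proof (rule measure_eqI)
    show "sets (distr M ?PB (\<lambda>\<omega>. \<lambda>i\<in>{..<m}. conf_pval n (\<lambda>k. S k \<omega>) i))
        = sets (distr (MP n m) ?PB (\<lambda>\<omega>. \<lambda>i\<in>{..<m}. conf_pval n (\<lambda>k. SI n k \<omega>) i))" by simp
    fix B assume "B \<in> sets (distr M ?PB (\<lambda>\<omega>. \<lambda>i\<in>{..<m}. conf_pval n (\<lambda>k. S k \<omega>) i))"
    then have B: "B \<in> sets ?PB" by simp
    have g1: "emeasure (distr M ?PB (\<lambda>\<omega>. \<lambda>i\<in>{..<m}. conf_pval n (\<lambda>k. S k \<omega>) i)) B
       = ennreal (real (card {\<pi>. \<pi> permutes {..<n+m} \<and> hpv n m \<pi> \<in> B}) / fact (n + m))"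
      by (rule general_pv[OF assms(1) meas exch no_ties B])
    have g2: "emeasure (distr (MP n m) ?PB (\<lambda>\<omega>. \<lambda>i\<in>{..<m}. conf_pval n (\<lambda>k. SI n k \<omega>) i)) B
       = ennreal (real (card {\<pi>. \<pi> permutes {..<n+m} \<and> hpv n m \<pi> \<in> B}) / fact (n + m))"
      by (rule general_pv[where M="MP n m" and S="SI n", OF prob_MP SI_meas iid_exch iid_noties B])
    show "emeasure (distr M ?PB (\<lambda>\<omega>. \<lambda>i\<in>{..<m}. conf_pval n (\<lambda>k. S k \<omega>) i)) B
       = emeasure (distr (MP n m) ?PB (\<lambda>\<omega>. \<lambda>i\<in>{..<m}. conf_pval n (\<lambda>k. SI n k \<omega>) i)) B"
      unfolding g1 g2 ..
  qed
  also have "distr (MP n m) ?PB (\<lambda>\<omega>. \<lambda>i\<in>{..<m}. conf_pval n (\<lambda>k. SI n k \<omega>) i)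
      = distr (MP n m) ?PB (\<lambda>(U, W). \<lambda>i\<in>{..<m}. gq n U (W i))"
  proof (rule distr_cong)
    fix \<omega> :: "(nat \<Rightarrow> real) \<times> (nat \<Rightarrow> real)"
    have c: "conf_pval n (\<lambda>k. SI n k \<omega>) i = gq n (fst \<omega>) (snd \<omega> i)" for i
      unfolding conf_pval_sum gq_def
      by (intro arg_cong[where f="\<lambda>x. (1 + x) / real (n + 1)"] sum.cong) (auto simp: SI_def)
    show "(\<lambda>i\<in>{..<m}. conf_pval n (\<lambda>k. SI n k \<omega>) i) = (case \<omega> of (U, W) \<Rightarrow> \<lambda>i\<in>{..<m}. gq n U (W i))"
      unfolding case_prod_unfold by (simp add: c)
  qed simp_all
  also have "\<dots> = PiM {..<n} (\<lambda>_. unif) \<bind> (\<lambda>U. distr (PiM {..<m} (\<lambda>_. unif)) ?PB (\<lambda>W. \<lambda>i\<in>{..<m}. gq n U (W i)))"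
    unfolding MP_def by (rule pair_distr_bind[OF prob_PiM_unif prob_PiM_unif gq_joint_meas])
  also have "\<dots> = PiM {..<n} (\<lambda>_. unif) \<bind> (\<lambda>U. PiM {..<m} (\<lambda>_::nat. PU n U))"
    by (rule bind_G[symmetric, OF assms(3)])
  also have "\<dots> = P_nm n m" by (simp add: P_nm_def unif_def)
  finally show ?thesis .
qed

end
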